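(* Let $L\geq\delta\geq 2$ and let $G$ be an $(L,\delta)$-almost-biregular graph. Then $G$ has a $64$-almost-regular subgraph with average degree at least $\frac{\delta}{16\log L}$.
   Context: Logarithms are to base $2$. A graph is $K$-almost-regular if its maximum degree is at most $K$ times its minimum degree. A bipartite graph $G$ is $(L,d)$-almost-biregular if it has parts $A$ and $B$ (with $A$ non-empty) such that $d_G(v)=d$ for every $v\in B$, and, writing $D=e(G)/|A|$, we have $D\geq d$ (equivalently $|A|\leq|B|$) and $d_G(u)\leq LD$ for every $u\in A$. Subgraphs are required to be non-empty; average degree is $2e/|V|$. *)

theory Defs
  imports Complex_Main
begin

definition graph :: "'a set \<Rightarrow> 'a set set \<Rightarrow> bool" where
  "graph V E \<longleftrightarrow> finite V \<and> (\<forall>e\<in>E. e \<subseteq> V \<and> card e = 2)"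

definition degree :: "'a set set \<Rightarrow> 'a \<Rightarrow> nat" where
  "degree E v = card {e\<in>E. v \<in> e}"

definition subgraph :: "'a set \<Rightarrow> 'a set set \<Rightarrow> 'a set \<Rightarrow> 'a set set \<Rightarrow> bool" where
  "subgraph V' E' V E \<longleftrightarrow> graph V' E' \<and> V' \<noteq> {} \<and> V' \<subseteq> V \<and> E' \<subseteq> E"

definition avg_degree :: "'a set \<Rightarrow> 'a set set \<Rightarrow> real" where
  "avg_degree V E = 2 * real (card E) / real (card V)"

definition almost_regular :: "real \<Rightarrow> 'a set \<Rightarrow> 'a set set \<Rightarrow> bool" where
  "almost_regular K V E \<longleftrightarrow>
     real (Max (degree E ` V)) \<le> K * real (Min (degree E ` V))"

definition almost_biregular :: "real \<Rightarrow> nat \<Rightarrow> 'a set \<Rightarrow> 'a set set \<Rightarrow> bool" where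
  "almost_biregular L d V E \<longleftrightarrow> graph V E \<and>
     (\<exists>A B. A \<union> B = V \<and> A \<inter> B = {} \<and> A \<noteq> {} \<and>
        (\<forall>e\<in>E. \<exists>a\<in>A. \<exists>b\<in>B. e = {a, b}) \<and>
        (\<forall>v\<in>B. degree E v = d) \<and>
        real (card E) / real (card A) \<ge> real d \<and>
        (\<forall>u\<in>A. real (degree E u) \<le> L * (real (card E) / real (card A))))"

end

theory Submission
  imports Defs
begin


lemma sum_degree_eq:
  assumes "finite F" "finite X"
  shows "(\<Sum>x\<in>X. degree F x) = (\<Sum>e\<in>F. card {x\<in>X. x \<in> e})"
proof -
  have "(\<Sum>x\<in>X. degree F x) = (\<Sum>x\<in>X. \<Sum>e\<in>{e. e\<in>F \<and> x \<in> e}. (1::nat))"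
    by (simp add: degree_def)
  also have "\<dots> = (\<Sum>e\<in>F. \<Sum>x\<in>{x. x\<in>X \<and> x \<in> e}. (1::nat))"
    using sum.swap_restrict[OF assms(2,1), of "\<lambda>_ _. (1::nat)" "\<lambda>x e. x \<in> e"] by simp
  finally show ?thesis by simp
qed

lemma sum_degree_one:
  assumes "finite F" "finite X" "\<And>e. e \<in> F \<Longrightarrow> card {x\<in>X. x \<in> e} = 1"
  shows "(\<Sum>x\<in>X. degree F x) = card F"
  using sum_degree_eq[OF assms(1,2)] assms(3) by simp

lemma degree_mono: "finite F \<Longrightarrow> F' \<subseteq> F \<Longrightarrow> degree F' v \<le> degree F v"
  unfolding degree_def by (rule card_mono) auto

lemma finish:
  assumes G: "graph V E" and W: "W \<subseteq> V" and FE: "F \<subseteq> E" and gW: "graph W F" and Fne: "F \<noteq> {}"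
    and deg: "\<And>v. v \<in> W \<Longrightarrow> real (degree F v) \<le> \<Delta>"
    and D64: "\<Delta> \<le> 64 * (real (card F) / real (card W))"
    and rx: "real (card F) / real (card W) \<ge> x"
  shows "\<exists>V' E'. subgraph V' E' V E \<and> almost_regular 64 V' E' \<and> avg_degree V' E' \<ge> 2 * x"
proof -
  define c where "c = real (card F) / real (card W)"
  have finW: "finite W" using gW by (simp add: graph_def)
  have Fsub: "\<And>e. e \<in> F \<Longrightarrow> e \<subseteq> W" and F2: "\<And>e. e \<in> F \<Longrightarrow> card e = 2"
    using gW by (auto simp: graph_def)
  have finF: "finite F" using finW Fsub by (meson Pow_iff finite_Pow_iff finite_subset subsetI)
  have Wne: "W \<noteq> {}" using Fne Fsub F2 by fastforce
  have cpos: "c > 0" unfolding c_def using Fne finF finW Wne by (simp add: card_gt_0_iff)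
  define ind where "ind S = {e\<in>F. e \<subseteq> S}" for S
  define phi where "phi S = real (card (ind S)) - c * real (card S)" for S
  define P where "P = {S. S \<subseteq> W \<and> S \<noteq> {}}"
  have finP: "finite P" unfolding P_def using finW by simp
  have WP: "W \<in> P" unfolding P_def using Wne by simp
  define m where "m = Max (phi ` P)"
  have "m \<in> phi ` P" unfolding m_def using finP WP by (intro Max_in) auto
  then obtain S where SP: "S \<in> P" and phiS: "phi S = m" by auto
  have maxS: "phi T \<le> phi S" if "T \<in> P" for T
    unfolding phiS m_def using finP that by (intro Max_ge) auto
  have SW: "S \<subseteq> W" and Sne: "S \<noteq> {}" using SP by (auto simp: P_def)
  have finS: "finite S" using SW finW finite_subset by blast
  have indW: "ind W = F" unfolding ind_def using Fsub by auto
  have phiW: "phi W = 0" unfolding phi_def indW c_def using Wne finW by simp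
  have phipos: "phi S \<ge> 0" using maxS[OF WP] phiW by simp
  have finind: "finite (ind S)" unfolding ind_def using finF by simp
  have degc: "real (degree (ind S) v) \<ge> c" if vS: "v \<in> S" for v
  proof (cases "S = {v}")
    case True
    have "ind S = {}"
    proof (rule ccontr)
      assume "ind S \<noteq> {}"
      then obtain e where "e \<in> F" "e \<subseteq> {v}" unfolding ind_def True by auto
      then have "card e \<le> 1" by (metis card.empty card.insert card_mono finite.emptyI finite.insertI empty_iff One_nat_def)
      with F2[OF \<open>e\<in>F\<close>] show False by simp
    qed
    then have "phi S = - c" unfolding phi_def True by simp
    with phipos cpos show ?thesis by simp
  next
    case False
    define T where "T = S - {v}"
    have TP: "T \<in> P" unfolding T_def P_def using SW Sne False vS by auto
    have indT: "ind T = {e\<in>ind S. v \<notin> e}" unfolding ind_def T_def by auto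
    have split: "card (ind S) = degree (ind S) v + card (ind T)"
      unfolding indT degree_def using finind
      by (subst card_Un_disjoint[symmetric]) (auto intro: arg_cong[where f=card])
    have cardT: "card T = card S - 1" unfolding T_def using vS finS by simp
    have "card S \<ge> 1" using Sne finS by (simp add: Suc_le_eq card_gt_0_iff)
    then have cs: "real (card S) = real (card T) + 1" using cardT by simp
    have "phi T = phi S - real (degree (ind S) v) + c"
      unfolding phi_def cs using split by (simp add: algebra_simps)
    with maxS[OF TP] show ?thesis by simp
  qed
  have gS: "graph S (ind S)" unfolding graph_def ind_def using finS F2 by auto
  have sub: "subgraph S (ind S) V E" unfolding subgraph_def using gS Sne SW W FE ind_def by auto
  have imne: "degree (ind S) ` S \<noteq> {}" using Sne by simp
  have finim: "finite (degree (ind S) ` S)" using finS by simp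
  have "Max (degree (ind S) ` S) \<in> degree (ind S) ` S" using Max_in[OF finim imne] .
  then obtain v1 where v1: "v1 \<in> S" "Max (degree (ind S) ` S) = degree (ind S) v1" by auto
  have "Min (degree (ind S) ` S) \<in> degree (ind S) ` S" using Min_in[OF finim imne] .
  then obtain v2 where v2: "v2 \<in> S" "Min (degree (ind S) ` S) = degree (ind S) v2" by auto
  have "real (degree (ind S) v1) \<le> real (degree F v1)"
    using degree_mono[OF finF, of "ind S" v1] unfolding ind_def by auto
  also have "\<dots> \<le> \<Delta>" using deg v1(1) SW by auto
  also have "\<dots> \<le> 64 * c" using D64 c_def by simp
  also have "\<dots> \<le> 64 * real (degree (ind S) v2)" using degc[OF v2(1)] by simp
  finally have ar: "almost_regular 64 S (ind S)" unfolding almost_regular_def v1(2) v2(2) .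
  have "real (card (ind S)) \<ge> c * real (card S)" using phipos unfolding phi_def by simp
  then have "2 * real (card (ind S)) / real (card S) \<ge> 2 * c"
    using Sne finS by (simp add: card_gt_0_iff field_simps)
  then have "avg_degree S (ind S) \<ge> 2 * x" unfolding avg_degree_def using rx c_def by simp
  with sub ar show ?thesis by blast
qed



lemma greedy:
  fixes EC :: "'a set set" and C B :: "'a set" and s M :: nat
  assumes finEC: "finite EC" and shape: "\<And>e. e \<in> EC \<Longrightarrow> \<exists>u\<in>C. \<exists>v\<in>B. e = {u,v}"
    and disj: "C \<inter> B = {}" and s: "s > 0"
  shows "\<exists>F\<subseteq>EC. (\<forall>v\<in>B. degree F v = 0 \<or> degree F v = s) \<and> (\<forall>u\<in>C. degree F u \<le> M) \<and>
     (\<forall>v\<in>B. degree F v = 0 \<longrightarrow> card {e\<in>EC. v\<in>e \<and> (\<forall>u\<in>C. u\<in>e \<longrightarrow> degree F u < M)} < s)"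
proof -
  define Q where "Q = {F. F \<subseteq> EC \<and> (\<forall>v\<in>B. degree F v = 0 \<or> degree F v = s) \<and> (\<forall>u\<in>C. degree F u \<le> M)}"
  have finQ: "finite Q" unfolding Q_def using finEC by (simp add: finite_subset[of _ "Pow EC"] subset_iff)
  have eQ: "{} \<in> Q" unfolding Q_def by (simp add: degree_def)
  define m where "m = Max (card ` Q)"
  have "m \<in> card ` Q" unfolding m_def using finQ eQ by (intro Max_in) auto
  then obtain F where FQ: "F \<in> Q" and cF: "card F = m" by auto
  have maxF: "card F' \<le> card F" if "F' \<in> Q" for F'
    unfolding cF m_def using finQ that by (intro Max_ge) auto
  have FEC: "F \<subseteq> EC" using FQ Q_def by auto
  have finF: "finite F" using FEC finEC finite_subset by blast
  have third: "card {e\<in>EC. v\<in>e \<and> (\<forall>u\<in>C. u\<in>e \<longrightarrow> degree F u < M)} < s"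
    if vB: "v \<in> B" and d0: "degree F v = 0" for v
  proof (rule ccontr)
    define X where "X = {e\<in>EC. v\<in>e \<and> (\<forall>u\<in>C. u\<in>e \<longrightarrow> degree F u < M)}"
    assume "\<not> card {e\<in>EC. v\<in>e \<and> (\<forall>u\<in>C. u\<in>e \<longrightarrow> degree F u < M)} < s"
    then have "s \<le> card X" unfolding X_def by simp
    then obtain T where TX: "T \<subseteq> X" and cT: "card T = s" by (meson obtain_subset_with_card_n)
    have finT: "finite T" using cT s card.infinite by fastforce
    have nov: "\<forall>e\<in>F. v \<notin> e" using d0 finF unfolding degree_def by auto
    have Tv: "\<And>e. e \<in> T \<Longrightarrow> v \<in> e" using TX X_def by auto
    have TEC: "T \<subseteq> EC" using TX X_def by auto
    have TF: "T \<inter> F = {}" using nov Tv by auto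
    define F' where "F' = F \<union> T"
    have cF': "card F' = card F + s" unfolding F'_def using card_Un_disjoint[OF finF finT] TF cT by (simp add: Int_commute)
    have F'EC: "F' \<subseteq> EC" unfolding F'_def using FEC TEC by auto
    have Bdeg: "degree F' w = 0 \<or> degree F' w = s" if wB: "w \<in> B" for w
    proof (cases "w = v")
      case True
      have "{e\<in>F'. w \<in> e} = T" unfolding F'_def True using nov Tv by auto
      then show ?thesis unfolding degree_def using cT by simp
    next
      case False
      have "{e\<in>F'. w \<in> e} = {e\<in>F. w \<in> e}"
      proof -
        have "w \<notin> e" if eT: "e \<in> T" for e
        proof -
          obtain u v' where "u \<in> C" "v' \<in> B" "e = {u,v'}" using shape TEC eT by blast
          moreover have "v \<in> e" using Tv eT by simp
          ultimately show ?thesis using False disj wB vB by auto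
        qed
        then show ?thesis unfolding F'_def by auto
      qed
      then show ?thesis using FQ wB unfolding Q_def degree_def by auto
    qed
    have Cdeg: "degree F' u \<le> M" if uC: "u \<in> C" for u
    proof (cases "\<exists>e\<in>T. u \<in> e")
      case False
      then have "{e\<in>F'. u \<in> e} = {e\<in>F. u \<in> e}" unfolding F'_def by auto
      then show ?thesis using FQ uC unfolding Q_def degree_def by auto
    next
      case True
      then obtain e0 where "e0 \<in> T" "u \<in> e0" by auto
      then have lt: "degree F u < M" using TX X_def uC by auto
      have sub1: "{e\<in>T. u \<in> e} \<subseteq> {{u,v}}"
      proof
        fix e assume "e \<in> {e\<in>T. u \<in> e}"
        then have eT: "e \<in> T" "u \<in> e" by auto
        obtain u' v' where "u' \<in> C" "v' \<in> B" "e = {u',v'}" using shape TEC eT by blast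
        moreover have "v \<in> e" using Tv eT by simp
        ultimately show "e \<in> {{u,v}}" using eT(2) disj uC vB by auto
      qed
      have c1: "card {e\<in>T. u \<in> e} \<le> 1" using card_mono[OF _ sub1] by simp
      have "{e\<in>F'. u \<in> e} = {e\<in>F. u \<in> e} \<union> {e\<in>T. u \<in> e}" unfolding F'_def by auto
      then have "degree F' u \<le> degree F u + card {e\<in>T. u \<in> e}" unfolding degree_def
        by (metis card_Un_le)
      then show ?thesis using lt c1 by simp
    qed
    have "F' \<in> Q" unfolding Q_def using F'EC Bdeg Cdeg by auto
    from maxF[OF this] cF' s show False by simp
  qed
  show ?thesis using FQ third unfolding Q_def by blast
qed



lemma class_edges:
  assumes finE: "finite E" and finT: "finite T" and finB: "finite B"
    and shape: "\<And>e. e \<in> E \<Longrightarrow> \<exists>a\<in>A. \<exists>b\<in>B. e = {a,b}"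
    and disj: "A \<inter> B = {}" and TA: "T \<subseteq> A"
  shows "card {e\<in>E. \<exists>u\<in>T. u \<in> e} = (\<Sum>u\<in>T. degree E u)"
    and "(\<Sum>v\<in>B. degree {e\<in>E. \<exists>u\<in>T. u \<in> e} v) = card {e\<in>E. \<exists>u\<in>T. u \<in> e}"
proof -
  let ?ET = "{e\<in>E. \<exists>u\<in>T. u \<in> e}"
  have finET: "finite ?ET" using finE by simp
  have "(\<Sum>u\<in>T. degree ?ET u) = card ?ET"
  proof (rule sum_degree_one[OF finET finT])
    fix e assume "e \<in> ?ET"
    then obtain u a b where "u \<in> T" "u \<in> e" "a \<in> A" "b \<in> B" "e = {a,b}" using shape by blast
    then have "{x\<in>T. x \<in> e} = {u}" using TA disj by auto
    then show "card {x\<in>T. x \<in> e} = 1" by simp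
  qed
  moreover have "degree ?ET u = degree E u" if "u \<in> T" for u
    unfolding degree_def using that by (intro arg_cong[where f=card]) auto
  ultimately show "card ?ET = (\<Sum>u\<in>T. degree E u)" by simp
  show "(\<Sum>v\<in>B. degree ?ET v) = card ?ET"
  proof (rule sum_degree_one[OF finET finB])
    fix e assume "e \<in> ?ET"
    then obtain a b where "a \<in> A" "b \<in> B" "e = {a,b}" using shape by blast
    then have "{x\<in>B. x \<in> e} = {b}" using disj by auto
    then show "card {x\<in>B. x \<in> e} = 1" by simp
  qed
qed

lemma class_lemma:
  fixes a :: real and s \<delta> :: nat
  assumes G: "graph V E" and AB: "A \<union> B = V" and disj: "A \<inter> B = {}"
    and shape: "\<And>e. e \<in> E \<Longrightarrow> \<exists>a\<in>A. \<exists>b\<in>B. e = {a,b}"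
    and degB: "\<And>v. v \<in> B \<Longrightarrow> degree E v = \<delta>"
    and CA: "C \<subseteq> A" and Cne: "C \<noteq> {}" and apos: "a > 0"
    and lo: "\<And>u. u \<in> C \<Longrightarrow> a \<le> real (degree E u)"
    and hi: "\<And>u. u \<in> C \<Longrightarrow> real (degree E u) \<le> 8 * a"
    and \<delta>a: "real \<delta> \<le> 2 * a"
    and spos: "s > 0" and sC: "2 * real s * real (card B) \<le> real (\<Sum>u\<in>C. degree E u)"
  shows "\<exists>W F. W \<subseteq> V \<and> F \<subseteq> E \<and> graph W F \<and> F \<noteq> {} \<and> (\<forall>v\<in>W. real (degree F v) \<le> 8 * real s)
     \<and> real (card F) / real (card W) \<ge> real s / 7"
proof -
  have finV: "finite V" using G by (simp add: graph_def)
  have finE: "finite E" using G unfolding graph_def by (meson Pow_iff finite_Pow_iff finite_subset subsetI)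
  have finA: "finite A" and finB: "finite B" using finV AB by auto
  have finC: "finite C" using finA CA finite_subset by blast
  define EC where "EC = {e\<in>E. \<exists>u\<in>C. u \<in> e}"
  have finEC: "finite EC" unfolding EC_def using finE by simp
  have shapeC: "\<exists>u\<in>C. \<exists>v\<in>B. e = {u,v}" if eEC: "e \<in> EC" for e
  proof -
    obtain u x y where "u \<in> C" "u \<in> e" "x \<in> A" "y \<in> B" "e = {x,y}" using eEC shape EC_def by blast
    then show ?thesis using CA disj by auto
  qed
  have CB: "C \<inter> B = {}" using CA disj by auto
  define M where "M = 8 * s"
  obtain F where FEC: "F \<subseteq> EC" and Fdeg: "\<forall>v\<in>B. degree F v = 0 \<or> degree F v = s"
    and FC: "\<forall>u\<in>C. degree F u \<le> M"
    and Fmax: "\<forall>v\<in>B. degree F v = 0 \<longrightarrow> card {e\<in>EC. v\<in>e \<and> (\<forall>u\<in>C. u\<in>e \<longrightarrow> degree F u < M)} < s"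
    using greedy[OF finEC shapeC CB spos, of M] by blast
  have finF: "finite F" using FEC finEC finite_subset by blast
  define B' where "B' = {v\<in>B. degree F v = s}"
  define W where "W = C \<union> B'"
  have finB': "finite B'" using finB B'_def by simp
  have FE: "F \<subseteq> E" using FEC EC_def by auto
  have WV: "W \<subseteq> V" unfolding W_def B'_def using CA AB by auto
  have finW: "finite W" using finV WV finite_subset by blast
  have Fshape: "\<exists>u\<in>C. \<exists>v\<in>B'. e = {u,v}" if eF: "e \<in> F" for e
  proof -
    obtain u v where uv: "u \<in> C" "v \<in> B" "e = {u,v}" using shapeC FEC eF by blast
    have "e \<in> {e\<in>F. v \<in> e}" using eF uv by simp
    then have "degree F v \<noteq> 0" unfolding degree_def using finF by auto
    then have "v \<in> B'" using Fdeg uv B'_def by auto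
    then show ?thesis using uv by blast
  qed
  have gW: "graph W F" unfolding graph_def
  proof (intro conjI ballI)
    show "finite W" by fact
    fix e assume "e \<in> F"
    then show "e \<subseteq> W" using Fshape W_def by blast
    show "card e = 2" using G FE \<open>e\<in>F\<close> by (auto simp: graph_def)
  qed
  have degW: "real (degree F v) \<le> 8 * real s" if "v \<in> W" for v
  proof -
    have "degree F v \<le> 8 * s" using that FC M_def B'_def W_def by auto
    then have "real (degree F v) \<le> real (8 * s)" using of_nat_le_iff by blast
    then show ?thesis by simp
  qed
  have cardF: "card F = s * card B'"
  proof -
    have "(\<Sum>v\<in>B. degree F v) = card F"
    proof (rule sum_degree_one[OF finF finB])
      fix e assume "e \<in> F"
      then obtain u v where "u \<in> C" "v \<in> B" "e = {u,v}" using shapeC FEC by blast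
      then have "{x\<in>B. x \<in> e} = {v}" using CB by auto
      then show "card {x\<in>B. x \<in> e} = 1" by simp
    qed
    moreover have "(\<Sum>v\<in>B. degree F v) = (\<Sum>v\<in>B. if v \<in> B' then s else 0)"
      using Fdeg B'_def by (intro sum.cong) auto
    moreover have "(\<Sum>v\<in>B. if v \<in> B' then s else 0) = s * card B'"
      using finB by (simp add: sum.If_cases B'_def Int_def)
    ultimately show ?thesis by simp
  qed
  have sumCF: "(\<Sum>u\<in>C. degree F u) = card F"
  proof (rule sum_degree_one[OF finF finC])
    fix e assume "e \<in> F"
    then obtain u v where "u \<in> C" "v \<in> B" "e = {u,v}" using shapeC FEC by blast
    then have "{x\<in>C. x \<in> e} = {u}" using CB by auto
    then show "card {x\<in>C. x \<in> e} = 1" by simp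
  qed
  define S where "S = {u\<in>C. \<not> degree F u < M}"
  have SC: "S \<subseteq> C" unfolding S_def by auto
  have finS: "finite S" using finC SC finite_subset by blast
  have MS: "M * card S \<le> s * card B'"
  proof -
    have "M * card S = (\<Sum>u\<in>S. M)" by simp
    also have "\<dots> \<le> (\<Sum>u\<in>S. degree F u)" using S_def by (intro sum_mono) auto
    also have "\<dots> \<le> (\<Sum>u\<in>C. degree F u)" using SC finC by (intro sum_mono2) auto
    finally show ?thesis using sumCF cardF by simp
  qed
  then have S8: "8 * card S \<le> card B'" using spos M_def by simp
  define ES where "ES = {e\<in>E. \<exists>u\<in>S. u \<in> e}"
  have cES: "card ES = (\<Sum>u\<in>S. degree E u)" and sES: "(\<Sum>v\<in>B. degree ES v) = card ES"
    using class_edges[OF finE finS finB shape disj] SC CA unfolding ES_def by auto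
  have cEC: "card EC = (\<Sum>u\<in>C. degree E u)" and sEC: "(\<Sum>v\<in>B. degree EC v) = card EC"
    using class_edges[OF finE finC finB shape disj CA] unfolding EC_def by auto
  have pointwise: "degree EC v \<le> (if v \<in> B' then \<delta> else 0) + s + degree ES v" if vB: "v \<in> B" for v
  proof (cases "v \<in> B'")
    case True
    have "degree EC v \<le> degree E v" using degree_mono[OF finE] EC_def by auto
    then show ?thesis using True degB vB by simp
  next
    case False
    then have d0: "degree F v = 0" using Fdeg vB B'_def by auto
    define Xv where "Xv = {e\<in>EC. v\<in>e \<and> (\<forall>u\<in>C. u\<in>e \<longrightarrow> degree F u < M)}"
    have "card Xv < s" using Fmax vB d0 Xv_def by auto
    have "{e\<in>EC. v \<in> e} \<subseteq> Xv \<union> {e\<in>ES. v \<in> e}"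
      unfolding Xv_def ES_def S_def EC_def by auto
    then have "degree EC v \<le> card (Xv \<union> {e\<in>ES. v \<in> e})"
      unfolding degree_def using finEC Xv_def ES_def finE by (intro card_mono) auto
    also have "\<dots> \<le> card Xv + degree ES v" unfolding degree_def by (rule card_Un_le)
    finally show ?thesis using \<open>card Xv < s\<close> False by simp
  qed
  have keynat: "card EC \<le> \<delta> * card B' + s * card B + card ES"
  proof -
    have "card EC \<le> (\<Sum>v\<in>B. (if v \<in> B' then \<delta> else 0) + s + degree ES v)"
      unfolding sEC[symmetric] using pointwise by (intro sum_mono) auto
    also have "\<dots> = (\<Sum>v\<in>B. if v \<in> B' then \<delta> else 0) + s * card B + card ES"
      by (simp add: sum.distrib sES)
    also have "(\<Sum>v\<in>B. if v \<in> B' then \<delta> else 0) = \<delta> * card B'"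
      using finB by (simp add: sum.If_cases B'_def Int_def)
    finally show ?thesis .
  qed
  have ESa: "real (card ES) \<le> 8 * a * real (card S)"
  proof -
    have "real (card ES) = (\<Sum>u\<in>S. real (degree E u))" using cES by simp
    also have "\<dots> \<le> (\<Sum>u\<in>S. 8 * a)" using hi SC by (intro sum_mono) auto
    finally show ?thesis by (simp add: mult.commute)
  qed
  have Ca: "a * real (card C) \<le> real (card EC)"
  proof -
    have "a * real (card C) = (\<Sum>u\<in>C. a)" by simp
    also have "\<dots> \<le> (\<Sum>u\<in>C. real (degree E u))" using lo by (intro sum_mono) auto
    finally show ?thesis using cEC by simp
  qed
  have key: "real (card EC) \<le> real \<delta> * real (card B') + real s * real (card B) + real (card ES)"
  proof -
    have "real (card EC) \<le> real (\<delta> * card B' + s * card B + card ES)" using keynat of_nat_le_iff by blast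
    then show ?thesis by simp
  qed
  have S8r: "8 * real (card S) \<le> real (card B')"
  proof -
    have "real (8 * card S) \<le> real (card B')" using S8 of_nat_le_iff by blast
    then show ?thesis by simp
  qed
  have sCr: "2 * real s * real (card B) \<le> real (card EC)" using sC cEC by simp
  have "real (card EC) \<le> 6 * a * real (card B')"
  proof -
    have "8 * a * real (card S) = a * (8 * real (card S))" by simp
    also have "\<dots> \<le> a * real (card B')" using S8r apos by (intro mult_left_mono) auto
    finally have "real (card ES) \<le> a * real (card B')" using ESa by linarith
    moreover have "real \<delta> * real (card B') \<le> 2 * a * real (card B')" using \<delta>a by (simp add: mult_right_mono)
    ultimately show ?thesis using key sCr by linarith
  qed
  with Ca have "a * real (card C) \<le> a * (6 * real (card B'))" by simp
  then have C6: "real (card C) \<le> 6 * real (card B')" using apos by simp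
  have ECpos: "real (card EC) > 0"
  proof -
    have "card C > 0" using Cne finC by (simp add: card_gt_0_iff)
    then have "a * real (card C) > 0" using apos by simp
    then show ?thesis using Ca by linarith
  qed
  have B'pos: "real (card B') > 0"
  proof -
    have "6 * a * real (card B') > 0" using ECpos \<open>real (card EC) \<le> 6 * a * real (card B')\<close> by linarith
    then show ?thesis using apos by (simp add: zero_less_mult_iff)
  qed
  have cW: "real (card W) \<le> 7 * real (card B')"
  proof -
    have "card W \<le> card C + card B'" unfolding W_def by (rule card_Un_le)
    then have "real (card W) \<le> real (card C + card B')" using of_nat_le_iff by blast
    then have "real (card W) \<le> real (card C) + real (card B')" by simp
    then show ?thesis using C6 by linarith
  qed
  have Wpos: "real (card W) > 0"
  proof -
    have "B' \<noteq> {}" using B'pos by auto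
    then have "W \<noteq> {}" using W_def by auto
    then show ?thesis using finW by (simp add: card_gt_0_iff)
  qed
  have Fne: "F \<noteq> {}" using cardF spos B'pos by auto
  have "real s / 7 \<le> real (card F) / real (card W)"
  proof -
    have "real s * real (card W) \<le> real s * (7 * real (card B'))" using cW by (simp add: mult_left_mono)
    then have "real s * real (card W) \<le> 7 * real (card F)" using cardF by simp
    then show ?thesis using Wpos by (simp add: field_simps)
  qed
  then show ?thesis using WV FE gW Fne degW by blast
qed



lemma small_L: fixes L :: real assumes "2 \<le> L" "L < 64" shows "L \<le> 16 * log 2 L"
proof -
  have m: "log 2 x \<le> log 2 L" if "0 < x" "x \<le> L" for x using that assms by simp
  consider "L < 4" | "4 \<le> L" "L < 16" | "16 \<le> L" by linarith
  then show ?thesis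
  proof cases
    case 1 then have "log 2 2 \<le> log 2 L" using m[of 2] assms by simp
    then show ?thesis using 1 by simp
  next
    case 2 then have "log 2 4 \<le> log 2 L" using m[of 4] by simp
    moreover have "log 2 (4::real) = 2" using log_pow_cancel[of 2 2] by simp
    ultimately show ?thesis using 2 by simp
  next
    case 3 then have "log 2 16 \<le> log 2 L" using m[of 16] by simp
    moreover have "log 2 (16::real) = 4" using log_pow_cancel[of 2 4] by simp
    ultimately show ?thesis using 3 assms by simp
  qed
qed

lemma final_arith:
  fixes l d K s :: real
  assumes l6: "l \<ge> 6" and dl: "d > 16 * l" and K: "K \<le> (l + 4) / 3" and Kpos: "K > 0"
    and s: "s \<ge> d / (4 * K) - 1"
  shows "s / 7 \<ge> d / (32 * l)"
proof -
  have dpos: "d > 0" using dl l6 by simp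
  have "d / (4 * K) \<ge> d / (4 * ((l + 4) / 3))"
    using K Kpos dpos by (intro divide_left_mono) auto
  then have s2: "s \<ge> 3 * d / (4 * (l + 4)) - 1" using s by simp
  have "d * (17 * l - 28) \<ge> 16 * l * (17 * l - 28)" using dl l6 by (intro mult_right_mono) auto
  moreover have "16 * l * (17 * l - 28) \<ge> 32 * l * (l + 4)"
  proof -
    have "l * (240 * l - 576) \<ge> 0" using l6 by (intro mult_nonneg_nonneg) auto
    then show ?thesis by (simp add: algebra_simps)
  qed
  ultimately have key: "d * (17 * l - 28) \<ge> 32 * l * (l + 4)" by linarith
  have key2: "d * l * 17 - d * 28 \<ge> l * l * 32 + l * 128" using key by (simp add: algebra_simps)
  have "3 * d / (4 * (l + 4)) - 1 \<ge> 7 * d / (32 * l)"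
    using l6 key2 by (simp add: field_simps)
  then show ?thesis using s2 by (simp add: field_simps)
qed



theorem lemma3p5:
  fixes V :: "'a set" and E :: "'a set set" and L :: real and \<delta> :: nat
  assumes "L \<ge> real \<delta>" and "\<delta> \<ge> 2"
    and "almost_biregular L \<delta> V E"
  shows "\<exists>V' E'. subgraph V' E' V E \<and> almost_regular 64 V' E' \<and>
           avg_degree V' E' \<ge> real \<delta> / (16 * log 2 L)"
proof -
  note Ld = assms(1) and d2 = assms(2)
  have G: "graph V E" using assms(3) by (simp add: almost_biregular_def)
  obtain A B where AB: "A \<union> B = V" and disj: "A \<inter> B = {}" and Ane: "A \<noteq> {}"
    and shape0: "\<forall>e\<in>E. \<exists>a\<in>A. \<exists>b\<in>B. e = {a, b}" and degB: "\<forall>v\<in>B. degree E v = \<delta>"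
    and Dd: "real (card E) / real (card A) \<ge> real \<delta>"
    and degA: "\<forall>u\<in>A. real (degree E u) \<le> L * (real (card E) / real (card A))"
    using assms(3) unfolding almost_biregular_def by blast
  have shape: "\<And>e. e \<in> E \<Longrightarrow> \<exists>a\<in>A. \<exists>b\<in>B. e = {a,b}" using shape0 by blast
  have finV: "finite V" using G by (simp add: graph_def)
  have finE: "finite E" using G unfolding graph_def by (meson Pow_iff finite_Pow_iff finite_subset subsetI)
  have finA: "finite A" and finB: "finite B" using finV AB by auto
  have Apos: "real (card A) > 0" using Ane finA by (simp add: card_gt_0_iff)
  define D where "D = real (card E) / real (card A)"
  have Dpos: "D \<ge> real \<delta>" using Dd D_def by simp
  have L2: "L \<ge> 2" using Ld d2 by linarith
  define l where "l = log 2 L"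
  have lpos: "l \<ge> 1" unfolding l_def using L2 by simp
  have Epos: "real (card E) > 0"
  proof -
    have "D > 0" using Dpos d2 by linarith
    then show ?thesis using D_def Apos by (simp add: zero_less_divide_iff)
  qed
  have sumB: "(\<Sum>v\<in>B. degree E v) = card E"
  proof (rule sum_degree_one[OF finE finB])
    fix e assume "e \<in> E"
    then obtain a b where "a \<in> A" "b \<in> B" "e = {a,b}" using shape by blast
    then have "{x\<in>B. x \<in> e} = {b}" using disj by auto
    then show "card {x\<in>B. x \<in> e} = 1" by simp
  qed
  have sumA: "(\<Sum>u\<in>A. degree E u) = card E"
  proof (rule sum_degree_one[OF finE finA])
    fix e assume "e \<in> E"
    then obtain a b where "a \<in> A" "b \<in> B" "e = {a,b}" using shape by blast
    then have "{x\<in>A. x \<in> e} = {a}" using disj by auto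
    then show "card {x\<in>A. x \<in> e} = 1" by simp
  qed
  have EB: "card E = \<delta> * card B" using sumB degB by (simp add: mult.commute)
  show ?thesis
  proof (cases "real \<delta> \<le> 16 * l")
    case True
    obtain e0 where e0E: "e0 \<in> E" using Epos by fastforce
    then obtain a b where ab: "a \<in> A" "b \<in> B" "e0 = {a,b}" using shape by blast
    have c2: "card e0 = 2" using G e0E by (simp add: graph_def)
    have aneb: "a \<noteq> b" using ab disj by auto
    have gW: "graph {a,b} {e0}" unfolding graph_def using c2 ab by auto
    have "\<exists>V' E'. subgraph V' E' V E \<and> almost_regular 64 V' E' \<and> avg_degree V' E' \<ge> 2 * (real \<delta> / (32 * l))"
    proof (rule finish[OF G _ _ gW, of 1])
      show "{a, b} \<subseteq> V" using ab AB by auto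
      show "{e0} \<subseteq> E" using e0E by simp
      show "{e0} \<noteq> {}" by simp
      show "real (degree {e0} v) \<le> 1" for v
      proof -
        have "degree {e0} v \<le> card {e0}" unfolding degree_def by (rule card_mono) auto
        then show ?thesis by simp
      qed
      show "1 \<le> 64 * (real (card {e0}) / real (card {a, b}))" using aneb by simp
      show "real \<delta> / (32 * l) \<le> real (card {e0}) / real (card {a, b})"
        using aneb True lpos by (simp add: field_simps)
    qed
    then show ?thesis unfolding l_def by simp
  next
    case False
    then have dl: "real \<delta> > 16 * l" by simp
    have L64: "L \<ge> 64"
    proof (rule ccontr)
      assume "\<not> L \<ge> 64"
      then have "L \<le> 16 * l" using small_L[OF L2] l_def by simp
      then show False using dl Ld by simp
    qed
    have l6: "l \<ge> 6"
    proof -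
      have "log 2 64 \<le> log 2 L" using L64 by simp
      moreover have "log 2 (64::real) = 6" using log_pow_cancel[of 2 6] by simp
      ultimately show ?thesis unfolding l_def by simp
    qed
    define Ahi where "Ahi = {u\<in>A. D / 2 \<le> real (degree E u)}"
    have finAhi: "finite Ahi" using finA Ahi_def by simp
    have AhiA: "Ahi \<subseteq> A" using Ahi_def by auto
    have sumAhi: "(\<Sum>u\<in>Ahi. real (degree E u)) \<ge> real (card E) / 2"
    proof -
      have "real (card E) = real (\<Sum>u\<in>A. degree E u)" using sumA by simp
      also have "\<dots> = (\<Sum>u\<in>A. real (degree E u))" by simp
      also have "\<dots> = (\<Sum>u\<in>Ahi. real (degree E u)) + (\<Sum>u\<in>A - Ahi. real (degree E u))"
        using sum.subset_diff[OF AhiA finA] by (simp add: add.commute)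
      also have "(\<Sum>u\<in>A - Ahi. real (degree E u)) \<le> (\<Sum>u\<in>A. D / 2)"
      proof -
        have "(\<Sum>u\<in>A - Ahi. real (degree E u)) \<le> (\<Sum>u\<in>A - Ahi. D / 2)"
          using Ahi_def by (intro sum_mono) auto
        also have "\<dots> \<le> (\<Sum>u\<in>A. D / 2)" using finA Dpos by (intro sum_mono2) auto
        finally show ?thesis .
      qed
      also have "(\<Sum>u\<in>A. D / 2) = real (card E) / 2" using D_def Apos by simp
      finally show ?thesis by simp
    qed
    define cl where "cl u = nat \<lfloor>log 8 (2 * real (degree E u) / D)\<rfloor>" for u
    define K where "K = nat \<lfloor>log 8 (2 * L)\<rfloor>"
    have Dp: "D > 0" using Dpos d2 by linarith
    have clprop: "cl u \<le> K \<and> 8 ^ cl u \<le> 2 * real (degree E u) / D \<and> 2 * real (degree E u) / D < 8 ^ (cl u + 1)"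
      if uA: "u \<in> Ahi" for u
    proof -
      define y where "y = 2 * real (degree E u) / D"
      have "D \<le> 2 * real (degree E u)" using uA Ahi_def by simp
      then have y1: "y \<ge> 1" using Dp by (simp add: y_def le_divide_eq)
      have "real (degree E u) \<le> L * D" using degA uA AhiA D_def by auto
      then have "2 * real (degree E u) \<le> (2 * L) * D" by simp
      then have y2: "y \<le> 2 * L" using Dp by (simp add: y_def divide_le_eq)
      have lg0: "log 8 y \<ge> 0" using y1 by simp
      have "log 8 y \<le> log 8 (2 * L)" using y1 y2 by simp
      then have "\<lfloor>log 8 y\<rfloor> \<le> \<lfloor>log 8 (2 * L)\<rfloor>" by (rule floor_mono)
      then have c1: "cl u \<le> K" unfolding cl_def K_def y_def[symmetric] by (simp add: nat_mono)
      define k where "k = \<lfloor>log 8 y\<rfloor>"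
      have k0: "k \<ge> 0" using lg0 k_def by simp
      have "8 powr k \<le> y \<and> y < 8 powr (k + 1)"
        using floor_log_eq_powr_iff[of y 8 k] y1 k_def by simp
      moreover have "real (cl u) = real_of_int k" unfolding cl_def y_def[symmetric] k_def[symmetric] using k0 by simp
      ultimately have "8 powr real (cl u) \<le> y \<and> y < 8 powr (real (cl u) + 1)" by simp
      moreover have "8 powr real (cl u) = 8 ^ cl u" by (simp add: powr_realpow)
      moreover have "8 powr (real (cl u) + 1) = 8 ^ (cl u + 1)"
      proof -
        have "8 powr real (cl u + 1) = (8::real) ^ (cl u + 1)" by (rule powr_realpow) simp
        then show ?thesis by (simp add: add.commute)
      qed
      ultimately show ?thesis using c1 y_def by simp
    qed
    define f where "f j = (\<Sum>u\<in>{x. x \<in> Ahi \<and> cl x = j}. real (degree E u))" for j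
    have sumf: "(\<Sum>j\<in>{..K}. f j) = (\<Sum>u\<in>Ahi. real (degree E u))"
      unfolding f_def using clprop by (intro sum.group[OF finAhi]) auto
    have "\<exists>j\<in>{..K}. f j \<ge> (real (card E) / 2) / real (K + 1)"
    proof (rule ccontr)
      assume "\<not> ?thesis"
      then have "\<And>j. j \<in> {..K} \<Longrightarrow> f j < (real (card E) / 2) / real (K + 1)" using not_le by blast
      then have "(\<Sum>j\<in>{..K}. f j) < (\<Sum>j\<in>{..K}. (real (card E) / 2) / real (K + 1))"
        by (intro sum_strict_mono) auto
      also have "\<dots> = real (card E) / 2"
      proof -
        have "(\<Sum>j\<in>{..K}. (real (card E) / 2) / real (K + 1)) = real (K + 1) * ((real (card E) / 2) / real (K + 1))"
          by (simp only: sum_constant card_atMost of_nat_mult) simp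
        also have "\<dots> = real (card E) / 2"
        proof -
          have gen: "\<And>q x::real. q > 0 \<Longrightarrow> q * (x / q) = x" by simp
          show ?thesis by (rule gen) simp
        qed
        finally show ?thesis .
      qed
      finally show False using sumf sumAhi by simp
    qed
    then obtain j where jK: "j \<le> K" and fj: "f j \<ge> (real (card E) / 2) / real (K + 1)" by auto
    define C where "C = {x. x \<in> Ahi \<and> cl x = j}"
    define a where "a = 8 ^ j * D / 2"
    have apos: "a > 0" unfolding a_def using Dp by (intro divide_pos_pos mult_pos_pos) auto
    have CA: "C \<subseteq> A" using C_def AhiA by auto
    have lo: "a \<le> real (degree E u)" if uC: "u \<in> C" for u
    proof -
      have "8 ^ j \<le> 2 * real (degree E u) / D" using clprop[of u] uC C_def by auto
      then have "8 ^ j * D \<le> 2 * real (degree E u)" using Dp by (simp add: le_divide_eq)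
      then show ?thesis unfolding a_def by simp
    qed
    have hi: "real (degree E u) \<le> 8 * a" if uC: "u \<in> C" for u
    proof -
      have "2 * real (degree E u) / D < 8 ^ (j + 1)" using clprop[of u] uC C_def by auto
      then have "2 * real (degree E u) < 8 ^ (j + 1) * D" using Dp by (simp add: divide_less_eq)
      then have "2 * real (degree E u) < 8 * (8 ^ j * D)" by simp
      then show ?thesis unfolding a_def by simp
    qed
    have da: "real \<delta> \<le> 2 * a"
    proof -
      have "(1::real) \<le> 8 ^ j" by simp
      then have "D \<le> 8 ^ j * D" using Dp by simp
      then show ?thesis using a_def Dpos by simp
    qed
    have Kpos: "real (K + 1) > 0" by simp
    have "(real (card E) / 2) / real (K + 1) > 0" using Epos by simp
    then have fjpos: "f j > 0" using fj by linarith
    have Cne: "C \<noteq> {}"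
    proof
      assume "C = {}"
      then have "f j = 0" unfolding f_def C_def[symmetric] by simp
      then show False using fjpos by simp
    qed
    have Bpos: "real (card B) > 0" using EB Epos by (simp add: zero_less_mult_iff)
    define eC where "eC = (\<Sum>u\<in>C. degree E u)"
    have eCf: "real eC = f j" unfolding eC_def f_def C_def by simp
    define s where "s = nat \<lfloor>real eC / (2 * real (card B))\<rfloor>"
    define z where "z = real eC / (2 * real (card B))"
    have z0: "z \<ge> 0" unfolding z_def by simp
    have sz: "real s = real_of_int \<lfloor>z\<rfloor>" unfolding s_def z_def[symmetric] using z0 by simp
    have s_le: "real s \<le> real eC / (2 * real (card B))" using sz z_def of_int_floor_le by metis
    have s_ge: "real s \<ge> real eC / (2 * real (card B)) - 1" using sz z_def real_of_int_floor_gt_diff_one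
      by (metis less_eq_real_def)
    have eCge: "real eC / (2 * real (card B)) \<ge> real \<delta> / (4 * real (K + 1))"
    proof -
      have "real eC \<ge> (real \<delta> * real (card B) / 2) / real (K + 1)" using eCf fj EB by simp
      then show ?thesis using Bpos Kpos by (simp add: field_simps)
    qed
    have Kl: "real (K + 1) \<le> (l + 4) / 3"
    proof -
      have l8: "log 8 z = log 2 z / 3" for z :: real using log_base_pow[of 2 3 z] by simp
      have w0: "log 8 (2 * L) \<ge> 0" using L2 by simp
      have "real K = real_of_int \<lfloor>log 8 (2 * L)\<rfloor>" unfolding K_def using w0 by simp
      then have "real K \<le> log 8 (2 * L)" by simp
      also have "\<dots> = (1 + l) / 3" unfolding l8 l_def using L2 by (simp add: log_mult)
      finally show ?thesis by simp
    qed
    have sfin: "real s / 7 \<ge> real \<delta> / (32 * l)"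
      using s_ge eCge by (intro final_arith[OF l6 dl Kl Kpos]) linarith
    have spos: "s > 0"
    proof -
      have "real \<delta> / (32 * l) > 0" using dl lpos by simp
      then show ?thesis using sfin by simp
    qed
    have sC: "2 * real s * real (card B) \<le> real (\<Sum>u\<in>C. degree E u)"
      using s_le Bpos eC_def by (simp add: field_simps)
    obtain W F where WV: "W \<subseteq> V" and FE: "F \<subseteq> E" and gW: "graph W F" and Fne: "F \<noteq> {}"
      and degW: "\<forall>v\<in>W. real (degree F v) \<le> 8 * real s"
      and rW: "real (card F) / real (card W) \<ge> real s / 7"
      using class_lemma[OF G AB disj shape _ CA Cne apos lo hi da spos sC] degB by blast
    have "\<exists>V' E'. subgraph V' E' V E \<and> almost_regular 64 V' E' \<and> avg_degree V' E' \<ge> 2 * (real \<delta> / (32 * l))"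
    proof (rule finish[OF G WV FE gW Fne, of "8 * real s"])
      show "\<And>v. v \<in> W \<Longrightarrow> real (degree F v) \<le> 8 * real s" using degW by blast
      show "8 * real s \<le> 64 * (real (card F) / real (card W))" using rW by simp
      show "real \<delta> / (32 * l) \<le> real (card F) / real (card W)" using rW sfin by simp
    qed
    then show ?thesis unfolding l_def by simp
  qed
qed

end
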